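(* Let $G_1,\dots,G_\ell$ be pairwise vertex-disjoint threshold graphs. Then their disjoint union satisfies $q(G_1\cup\cdots\cup G_\ell)\le 4$.
   Context: A threshold graph is a (simple, not necessarily connected) graph obtained from a single vertex by repeatedly adding either a new isolated vertex or a new dominating vertex (a vertex adjacent to all previously added vertices). For a simple graph $G$ on vertices $v_1,\dots,v_n$, $S(G)$ denotes the set of all real symmetric $n\times n$ matrices $A=(a_{ij})$ such that for all $i\neq j$, $a_{ij}\neq 0$ if and only if $\{v_i,v_j\}$ is an edge of $G$ (diagonal entries are arbitrary). For a square matrix $A$, $\mathrm{DSpec}(A)$ is the set of distinct eigenvalues of $A$, and $q(G)=\min\{|\mathrm{DSpec}(A)| : A\in S(G)\}$. The union $G_1\cup\cdots\cup G_\ell$ of vertex-disjoint graphs has vertex set and edge set equal to the unions of the respective vertex sets and edge sets. *)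

theory Defs
  imports Complex_Main
begin

type_synonym 'a graph = "'a set \<times> 'a set set"

definition verts :: "'a graph \<Rightarrow> 'a set" where "verts G = fst G"
definition edges :: "'a graph \<Rightarrow> 'a set set" where "edges G = snd G"

inductive threshold :: "'a graph \<Rightarrow> bool" where
  single: "threshold ({v}, {})"
| isolated: "threshold (V, E) \<Longrightarrow> v \<notin> V \<Longrightarrow> threshold (insert v V, E)"
| dominating: "threshold (V, E) \<Longrightarrow> v \<notin> V \<Longrightarrow>
     threshold (insert v V, E \<union> {{v, u} | u. u \<in> V})"

definition graph_Union :: "nat \<Rightarrow> (nat \<Rightarrow> 'a graph) \<Rightarrow> 'a graph" where
  "graph_Union l Gs = ((\<Union>i<l. verts (Gs i)), (\<Union>i<l. edges (Gs i)))"

text \<open>Real square matrices indexed by the (finite) vertex set V are modelled as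
  functions 'a \<Rightarrow> 'a \<Rightarrow> real, of which only the entries in V \<times> V matter.\<close>

definition S :: "'a graph \<Rightarrow> ('a \<Rightarrow> 'a \<Rightarrow> real) set" where
  "S G = {A. (\<forall>i\<in>verts G. \<forall>j\<in>verts G. A i j = A j i) \<and>
             (\<forall>i\<in>verts G. \<forall>j\<in>verts G. i \<noteq> j \<longrightarrow> (A i j \<noteq> 0 \<longleftrightarrow> {i, j} \<in> edges G))}"

definition is_eigenvalue :: "'a set \<Rightarrow> ('a \<Rightarrow> 'a \<Rightarrow> real) \<Rightarrow> real \<Rightarrow> bool" where
  "is_eigenvalue V A mu \<longleftrightarrow>
     (\<exists>x::'a \<Rightarrow> real. (\<exists>i\<in>V. x i \<noteq> 0) \<and> (\<forall>i\<in>V. (\<Sum>j\<in>V. A i j * x j) = mu * x i))"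

definition DSpec :: "'a set \<Rightarrow> ('a \<Rightarrow> 'a \<Rightarrow> real) \<Rightarrow> real set" where
  "DSpec V A = {mu. is_eigenvalue V A mu}"

definition q :: "'a graph \<Rightarrow> nat" where
  "q G = (LEAST k. \<exists>A\<in>S G. card (DSpec (verts G) A) = k)"

end

theory Submission
  imports Defs
begin

definition good :: "'a set \<Rightarrow> 'a set set \<Rightarrow> ('a \<Rightarrow> 'a \<Rightarrow> real) \<Rightarrow> bool" where
  "good V E A \<longleftrightarrow> (\<forall>i\<in>V. \<forall>j\<in>V. A i j = A j i) \<and>
     (\<forall>i\<in>V. \<forall>j\<in>V. i \<noteq> j \<longrightarrow> (A i j \<noteq> 0 \<longleftrightarrow> {i, j} \<in> E)) \<and>
     (\<forall>lam. is_eigenvalue V A lam \<longrightarrow> lam \<in> {0,1,2,3})"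

definition inv :: "'a set \<Rightarrow> 'a set set \<Rightarrow> bool" where
  "inv V E \<longleftrightarrow> finite V \<and> V \<noteq> {} \<and> (\<forall>e\<in>E. e \<subseteq> V) \<and>
     (\<exists>A mu x. mu \<in> {1,2} \<and> good V E A \<and> (\<forall>i\<in>V. x i \<noteq> 0) \<and>
        (\<forall>i\<in>V. (\<Sum>j\<in>V. A i j * x j) = mu * x i))"

lemma inv_single: "inv {v} {}"
proof -
  have "good {v} {} (\<lambda>_ _. 1)"
    unfolding good_def is_eigenvalue_def by auto
  then show ?thesis unfolding inv_def
    by (intro conjI exI[of _ "\<lambda>_ _. 1"] exI[of _ "1::real"] exI[of _ "\<lambda>_. 1::real"]) auto
qed

lemma inv_isolated:
  assumes "inv V E" "v \<notin> V"
  shows "inv (insert v V) E"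
proof -
  from assms(1) obtain A mu x where fin: "finite V" and ne: "V \<noteq> {}" and EV: "\<forall>e\<in>E. e \<subseteq> V"
    and mu: "mu \<in> {1,2}" and g: "good V E A" and xnz: "\<forall>i\<in>V. x i \<noteq> 0"
    and ev: "\<forall>i\<in>V. (\<Sum>j\<in>V. A i j * x j) = mu * x i"
    unfolding inv_def by blast
  define A' where "A' = (\<lambda>i j. if i = v \<and> j = v then mu else if i = v \<or> j = v then 0 else A i j)"
  define x' where "x' = x(v := 1)"
  have sumV: "(\<Sum>j\<in>V. A' i j * z j) = (if i = v then 0 else (\<Sum>j\<in>V. A i j * z j))" for i z
  proof (cases "i = v")
    case True then show ?thesis using assms(2) by (auto simp: A'_def intro!: sum.neutral)
  next
    case False then show ?thesis using assms(2) by (auto simp: A'_def intro!: sum.cong)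
  qed
  have sumI: "(\<Sum>j\<in>insert v V. A' i j * z j) = A' i v * z v + (\<Sum>j\<in>V. A' i j * z j)" for i z
    using fin assms(2) by (simp add: sum.insert)
  have sumx: "(\<Sum>j\<in>V. A i j * x' j) = (\<Sum>j\<in>V. A i j * x j)" for i
    using assms(2) by (auto simp: x'_def intro!: sum.cong)
  have g': "good (insert v V) E A'"
    unfolding good_def
  proof (intro conjI allI impI ballI)
    fix i j assume "i \<in> insert v V" "j \<in> insert v V"
    then show "A' i j = A' j i" using g unfolding good_def A'_def by auto
  next
    fix i j assume ij: "i \<in> insert v V" "j \<in> insert v V" "i \<noteq> j"
    show "(A' i j \<noteq> 0) = ({i, j} \<in> E)"
    proof (cases "i = v \<or> j = v")
      case True
      then have "{i,j} \<notin> E" using EV assms(2) by auto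
      then show ?thesis using True ij by (auto simp: A'_def)
    next
      case False
      then show ?thesis using g ij unfolding good_def A'_def by auto
    qed
  next
    fix lam assume "is_eigenvalue (insert v V) A' lam"
    then obtain z where znz: "\<exists>i\<in>insert v V. z i \<noteq> 0"
      and ez: "\<forall>i\<in>insert v V. (\<Sum>j\<in>insert v V. A' i j * z j) = lam * z i"
      unfolding is_eigenvalue_def by blast
    show "lam \<in> {0,1,2,3}"
    proof (cases "\<exists>i\<in>V. z i \<noteq> 0")
      case True
      have "\<forall>i\<in>V. (\<Sum>j\<in>V. A i j * z j) = lam * z i"
      proof
        fix i assume i: "i \<in> V"
        then have "i \<noteq> v" using assms(2) by auto
        then show "(\<Sum>j\<in>V. A i j * z j) = lam * z i"
          using ez[rule_format, of i] i sumI[of i z] sumV[of i z] by (simp add: A'_def)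
      qed
      then have "is_eigenvalue V A lam" unfolding is_eigenvalue_def using True by blast
      then show ?thesis using g unfolding good_def by blast
    next
      case False
      then have "z v \<noteq> 0" using znz by auto
      moreover have "mu * z v = lam * z v"
        using ez[rule_format, of v] sumI[of v z] sumV[of v z] by (auto simp: A'_def)
      ultimately have "lam = mu" by simp
      then show ?thesis using mu by auto
    qed
  qed
  have ev': "\<forall>i\<in>insert v V. (\<Sum>j\<in>insert v V. A' i j * x' j) = mu * x' i"
  proof
    fix i assume i: "i \<in> insert v V"
    show "(\<Sum>j\<in>insert v V. A' i j * x' j) = mu * x' i"
    proof (cases "i = v")
      case True then show ?thesis using sumI[of i x'] sumV[of i x'] by (simp add: A'_def x'_def)
    next
      case False
      then have "i \<in> V" using i by auto
      then show ?thesis using False sumI[of i x'] sumV[of i x'] sumx[of i] ev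
        by (simp add: A'_def x'_def)
    qed
  qed
  have "\<forall>i\<in>insert v V. x' i \<noteq> 0" using xnz by (auto simp: x'_def)
  then show ?thesis unfolding inv_def using fin EV mu g' ev' by blast
qed

lemma inv_dominating:
  assumes "inv V E" "v \<notin> V"
  shows "inv (insert v V) (E \<union> {{v, u} | u. u \<in> V})"
proof -
  from assms(1) obtain A mu x where fin: "finite V" and ne: "V \<noteq> {}" and EV: "\<forall>e\<in>E. e \<subseteq> V"
    and mu: "mu \<in> {1,2}" and g: "good V E A" and xnz: "\<forall>i\<in>V. x i \<noteq> 0"
    and ev: "\<forall>i\<in>V. (\<Sum>j\<in>V. A i j * x j) = mu * x i"
    unfolding inv_def by blast
  have sym: "\<forall>i\<in>V. \<forall>j\<in>V. A i j = A j i" using g unfolding good_def by blast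
  define E' where "E' = E \<union> {{v, u} | u. u \<in> V}"
  define nrm where "nrm = sqrt (\<Sum>j\<in>V. x j ^ 2)"
  obtain j0 where j0: "j0 \<in> V" using ne by blast
  have "x j0 ^ 2 > 0" using xnz j0 by simp
  moreover have "x j0 ^ 2 \<le> (\<Sum>j\<in>V. x j ^ 2)"
    using fin j0 by (intro member_le_sum) auto
  ultimately have spos: "(\<Sum>j\<in>V. x j ^ 2) > 0" by linarith
  then have npos: "nrm > 0" unfolding nrm_def by simp
  define b where "b = (\<lambda>j. x j / nrm)"
  have bnz: "\<forall>i\<in>V. b i \<noteq> 0" using xnz npos by (simp add: b_def)
  have beig: "(\<Sum>j\<in>V. A i j * b j) = mu * b i" if "i \<in> V" for i
  proof -
    have "(\<Sum>j\<in>V. A i j * b j) = (\<Sum>j\<in>V. A i j * x j) / nrm"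
      unfolding b_def sum_divide_distrib by (simp add: algebra_simps)
    then show ?thesis using ev that by (simp add: b_def)
  qed
  have bnorm: "(\<Sum>j\<in>V. b j * b j) = 1"
  proof -
    have "(\<Sum>j\<in>V. b j * b j) = (\<Sum>j\<in>V. x j ^ 2) / nrm ^ 2"
      unfolding b_def sum_divide_distrib by (simp add: power2_eq_square)
    also have "nrm ^ 2 = (\<Sum>j\<in>V. x j ^ 2)" unfolding nrm_def using spos by simp
    finally show ?thesis using spos by simp
  qed
  define A' where "A' = (\<lambda>i j. if i = v \<and> j = v then mu else if i = v then b j
                                else if j = v then b i else A i j)"
  have sumI: "(\<Sum>j\<in>insert v V. A' i j * z j) = A' i v * z v + (\<Sum>j\<in>V. A' i j * z j)" for i z
    using fin assms(2) by (simp add: sum.insert)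
  have sumV: "(\<Sum>j\<in>V. A' i j * z j) = (if i = v then (\<Sum>j\<in>V. b j * z j) else (\<Sum>j\<in>V. A i j * z j))" for i z
    using assms(2) by (auto simp: A'_def intro!: sum.cong)
  have g': "good (insert v V) E' A'"
    unfolding good_def
  proof (intro conjI allI impI ballI)
    fix i j assume "i \<in> insert v V" "j \<in> insert v V"
    then show "A' i j = A' j i" using sym unfolding A'_def by auto
  next
    fix i j assume ij: "i \<in> insert v V" "j \<in> insert v V" "i \<noteq> j"
    show "(A' i j \<noteq> 0) = ({i, j} \<in> E')"
    proof (cases "i = v \<or> j = v")
      case True
      then have "{i,j} \<in> E'" using ij unfolding E'_def by auto
      moreover have "A' i j \<noteq> 0" using True ij bnz by (auto simp: A'_def)
      ultimately show ?thesis by simp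
    next
      case False
      then have "({i,j} \<in> E') = ({i,j} \<in> E)" unfolding E'_def by (auto simp: doubleton_eq_iff)
      then show ?thesis using g ij False unfolding good_def A'_def by auto
    qed
  next
    fix lam assume "is_eigenvalue (insert v V) A' lam"
    then obtain z where znz: "\<exists>i\<in>insert v V. z i \<noteq> 0"
      and ez: "\<forall>i\<in>insert v V. (\<Sum>j\<in>insert v V. A' i j * z j) = lam * z i"
      unfolding is_eigenvalue_def by blast
    define t where "t = z v"
    define s where "s = (\<Sum>j\<in>V. b j * z j)"
    have rowV: "(\<Sum>j\<in>V. A i j * z j) + b i * t = lam * z i" if i: "i \<in> V" for i
    proof -
      have "i \<noteq> v" using i assms(2) by auto
      then show ?thesis using ez[rule_format, of i] i sumI[of i z] sumV[of i z]
        by (simp add: A'_def t_def)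
    qed
    have rowv: "s + mu * t = lam * t"
      using ez[rule_format, of v] sumI[of v z] sumV[of v z] by (simp add: A'_def t_def s_def)
    show "lam \<in> {0,1,2,3}"
    proof (cases "t = 0")
      case True
      then have "\<exists>i\<in>V. z i \<noteq> 0" using znz t_def by auto
      moreover have "\<forall>i\<in>V. (\<Sum>j\<in>V. A i j * z j) = lam * z i" using rowV True by simp
      ultimately have "is_eigenvalue V A lam" unfolding is_eigenvalue_def by blast
      then show ?thesis using g unfolding good_def by blast
    next
      case False
      have "(\<Sum>i\<in>V. b i * (\<Sum>j\<in>V. A i j * z j)) = (\<Sum>i\<in>V. \<Sum>j\<in>V. b i * A i j * z j)"
        by (simp add: sum_distrib_left mult.assoc)
      also have "\<dots> = (\<Sum>j\<in>V. \<Sum>i\<in>V. b i * A i j * z j)" by (rule sum.swap)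
      also have "\<dots> = (\<Sum>j\<in>V. (\<Sum>i\<in>V. A j i * b i) * z j)"
        unfolding sum_distrib_right using sym by (intro sum.cong refl) (simp add: mult.commute)
      also have "\<dots> = (\<Sum>j\<in>V. mu * b j * z j)" by (intro sum.cong refl) (simp add: beig)
      also have "\<dots> = mu * s" by (simp add: s_def sum_distrib_left mult.assoc)
      finally have L: "(\<Sum>i\<in>V. b i * (\<Sum>j\<in>V. A i j * z j)) = mu * s" .
      have "(\<Sum>i\<in>V. b i * (\<Sum>j\<in>V. A i j * z j)) = (\<Sum>i\<in>V. b i * (lam * z i - b i * t))"
        by (intro sum.cong refl) (simp add: rowV[symmetric])
      also have "\<dots> = lam * s - (\<Sum>i\<in>V. b i * b i) * t"
        by (simp add: s_def right_diff_distrib sum_subtractf sum_distrib_left sum_distrib_right mult.assoc mult.left_commute)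
      also have "\<dots> = lam * s - t" using bnorm by simp
      finally have "lam * s - t = mu * s" using L by simp
      then have "(lam - mu) * s = t" by (simp add: algebra_simps)
      moreover have "s = (lam - mu) * t" using rowv by (simp add: algebra_simps)
      ultimately have "(lam - mu) * (lam - mu) * t = 1 * t" by simp
      then have "(lam - mu) * (lam - mu) = 1" using False by simp
      then have "(lam - mu - 1) * (lam - mu + 1) = 0" by (simp add: algebra_simps)
      then have "lam = mu + 1 \<or> lam = mu - 1" by auto
      then show ?thesis using mu by auto
    qed
  qed
  define sg :: real where "sg = 3 - 2 * mu"
  define z where "z = b(v := sg)"
  have ev': "\<forall>i\<in>insert v V. (\<Sum>j\<in>insert v V. A' i j * z j) = (3 - mu) * z i"
  proof
    fix i assume i: "i \<in> insert v V"
    have zV: "(\<Sum>j\<in>V. A i j * z j) = (\<Sum>j\<in>V. A i j * b j)" for i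
      using assms(2) by (auto simp: z_def intro!: sum.cong)
    have zV2: "(\<Sum>j\<in>V. b j * z j) = (\<Sum>j\<in>V. b j * b j)"
      using assms(2) by (auto simp: z_def intro!: sum.cong)
    show "(\<Sum>j\<in>insert v V. A' i j * z j) = (3 - mu) * z i"
    proof (cases "i = v")
      case True
      then have "(\<Sum>j\<in>insert v V. A' i j * z j) = mu * sg + 1"
        using sumI[of i z] sumV[of i z] zV2 bnorm by (simp add: A'_def z_def)
      also have "\<dots> = (3 - mu) * z i" using mu True by (auto simp: z_def sg_def)
      finally show ?thesis .
    next
      case False
      then have iV: "i \<in> V" using i by auto
      then have "(\<Sum>j\<in>insert v V. A' i j * z j) = b i * sg + mu * b i"
        using False sumI[of i z] sumV[of i z] zV[of i] beig[OF iV] by (simp add: A'_def z_def)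
      also have "\<dots> = (3 - mu) * z i" using False by (simp add: z_def sg_def algebra_simps)
      finally show ?thesis .
    qed
  qed
  have znz: "\<forall>i\<in>insert v V. z i \<noteq> 0" using bnz mu by (auto simp: z_def sg_def)
  have mu': "3 - mu \<in> {1,2::real}" using mu by auto
  have EV': "\<forall>e\<in>E'. e \<subseteq> insert v V" using EV unfolding E'_def by auto
  show ?thesis unfolding inv_def E'_def[symmetric]
    using fin EV' mu' g' ev' znz by blast
qed

lemma thr_inv: "threshold G \<Longrightarrow> inv (fst G) (snd G)"
  by (induction G rule: threshold.induct) (auto intro: inv_single inv_isolated inv_dominating)

theorem mainTheorem2:
  fixes l :: nat and Gs :: "nat \<Rightarrow> 'a graph"
  assumes "\<forall>i<l. threshold (Gs i)"
    and "\<forall>i<l. \<forall>j<l. i \<noteq> j \<longrightarrow> verts (Gs i) \<inter> verts (Gs j) = {}"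
  shows "q (graph_Union l Gs) \<le> 4"
proof -
  define Vs where "Vs k = verts (Gs k)" for k
  define Es where "Es k = edges (Gs k)" for k
  have invk: "inv (Vs k) (Es k)" if "k < l" for k
    using thr_inv[of "Gs k"] assms(1) that by (simp add: Vs_def Es_def verts_def edges_def)
  have "\<forall>k. \<exists>A. k < l \<longrightarrow> good (Vs k) (Es k) A"
    using invk unfolding inv_def by blast
  then obtain AA where AA: "\<And>k. k < l \<Longrightarrow> good (Vs k) (Es k) (AA k)" by metis
  have fink: "finite (Vs k)" and Esub: "\<forall>e\<in>Es k. e \<subseteq> Vs k" if "k < l" for k
    using invk[OF that] unfolding inv_def by auto
  have disj: "\<And>i j. i < l \<Longrightarrow> j < l \<Longrightarrow> i \<noteq> j \<Longrightarrow> Vs i \<inter> Vs j = {}"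
    using assms(2) by (simp add: Vs_def)
  define comp where "comp i = (SOME k. k < l \<and> i \<in> Vs k)" for i
  have comp_eq: "comp i = k" if "k < l" "i \<in> Vs k" for i k
  proof -
    have "comp i < l \<and> i \<in> Vs (comp i)" unfolding comp_def
      by (rule someI[of "\<lambda>k. k < l \<and> i \<in> Vs k" k]) (use that in auto)
    then show ?thesis using disj[of "comp i" k] that by blast
  qed
  define V where "V = (\<Union>k<l. Vs k)"
  define E where "E = (\<Union>k<l. Es k)"
  have GU: "graph_Union l Gs = (V, E)"
    unfolding graph_Union_def V_def E_def Vs_def Es_def by simp
  have finV: "finite V" unfolding V_def using fink by auto
  define B where "B i j = (if comp i = comp j then AA (comp i) i j else 0)" for i j
  have inV: "\<exists>k<l. i \<in> Vs k \<and> comp i = k" if "i \<in> V" for i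
    using that comp_eq unfolding V_def by blast
  have BS: "B \<in> S (V, E)"
    unfolding S_def verts_def edges_def
  proof (intro CollectI conjI ballI impI, simp_all only: fst_conv snd_conv)
    fix i j assume i: "i \<in> V" and j: "j \<in> V"
    obtain k where k: "k < l" "i \<in> Vs k" "comp i = k" using inV[OF i] by blast
    obtain m where m: "m < l" "j \<in> Vs m" "comp j = m" using inV[OF j] by blast
    show "B i j = B j i"
    proof (cases "k = m")
      case True then show ?thesis using AA[OF k(1)] k m unfolding B_def good_def by auto
    next
      case False then show ?thesis using k m unfolding B_def by auto
    qed
  next
    fix i j assume i: "i \<in> V" and j: "j \<in> V" and ij: "i \<noteq> j"
    obtain k where k: "k < l" "i \<in> Vs k" "comp i = k" using inV[OF i] by blast
    obtain m where m: "m < l" "j \<in> Vs m" "comp j = m" using inV[OF j] by blast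
    have Ech: "{i, j} \<in> E \<Longrightarrow> k = m \<and> {i,j} \<in> Es k"
    proof -
      assume "{i, j} \<in> E"
      then obtain r where r: "r < l" "{i,j} \<in> Es r" unfolding E_def by blast
      then have "i \<in> Vs r" "j \<in> Vs r" using Esub[OF r(1)] by auto
      then have "r = k" "r = m" using comp_eq r k m by auto
      then show ?thesis using r by simp
    qed
    show "(B i j \<noteq> 0) = ({i, j} \<in> E)"
    proof (cases "k = m")
      case True
      have "{i,j} \<in> Es k \<Longrightarrow> {i,j} \<in> E" unfolding E_def using k by blast
      then show ?thesis using AA[OF k(1)] k m True ij Ech unfolding B_def good_def by auto
    next
      case False then show ?thesis using k m Ech unfolding B_def by auto
    qed
  qed
  have spec: "DSpec V B \<subseteq> {0,1,2,3}"
  proof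
    fix lam assume "lam \<in> DSpec V B"
    then obtain z where znz: "\<exists>i\<in>V. z i \<noteq> 0"
      and ez: "\<forall>i\<in>V. (\<Sum>j\<in>V. B i j * z j) = lam * z i"
      unfolding DSpec_def is_eigenvalue_def by blast
    obtain i0 where i0: "i0 \<in> V" "z i0 \<noteq> 0" using znz by blast
    obtain k where k: "k < l" "i0 \<in> Vs k" "comp i0 = k" using inV[OF i0(1)] by blast
    have sub: "Vs k \<subseteq> V" unfolding V_def using k by blast
    have "\<forall>i\<in>Vs k. (\<Sum>j\<in>Vs k. AA k i j * z j) = lam * z i"
    proof
      fix i assume i: "i \<in> Vs k"
      have ci: "comp i = k" using comp_eq k i by blast
      have "(\<Sum>j\<in>V. B i j * z j) = (\<Sum>j\<in>Vs k. B i j * z j)"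
      proof (rule sum.mono_neutral_right[OF finV sub], intro ballI)
        fix j assume j: "j \<in> V - Vs k"
        then obtain m where m: "m < l" "j \<in> Vs m" "comp j = m" using inV by blast
        then have "m \<noteq> k" using j by auto
        then show "B i j * z j = 0" using ci m unfolding B_def by auto
      qed
      also have "\<dots> = (\<Sum>j\<in>Vs k. AA k i j * z j)"
        using ci comp_eq k by (intro sum.cong refl) (auto simp: B_def)
      finally show "(\<Sum>j\<in>Vs k. AA k i j * z j) = lam * z i"
        using ez i sub by auto
    qed
    then have "is_eigenvalue (Vs k) (AA k) lam"
      unfolding is_eigenvalue_def using k i0 by blast
    then show "lam \<in> {0,1,2,3}" using AA[OF k(1)] unfolding good_def by blast
  qed
  have c4: "card (DSpec V B) \<le> 4"
  proof -
    have "card (DSpec V B) \<le> card {0,1,2,3::real}" by (rule card_mono[OF _ spec]) simp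
    also have "\<dots> = 4" by simp
    finally show ?thesis .
  qed
  have "q (graph_Union l Gs) \<le> card (DSpec V B)"
    unfolding q_def GU using BS by (intro Least_le) (auto simp: verts_def)
  then show ?thesis using c4 by simp
qed

end
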